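(* Let $(\mathbf{P},\mathbf{A},\mathbf{U})$ be a two-sided matching market and let $\mathbf{M}^{\rm st}$ be its (nonempty) set of stable matchings. For every $\delta\in(0,1]$ there exist completely uncoupled policies $\pi_{\mathbf{P}}$ (used by every proposer) and $\pi_{\mathbf{A}}$ (used by every acceptor) such that the random sequence of matchings $\mu^t=\mu(a^t)$ generated by the repeated game satisfies $$\mathbb{P}\big[\mu^t\in\mathbf{M}^{\rm st}\big]>1-\delta\quad\text{for all sufficiently large } t.$$
   Context: A two-sided matching market is a tuple $(\mathbf{P},\mathbf{A},\mathbf{U})$ with disjoint finite sets of proposers $\mathbf{P}=\{P_1,\dots,P_n\}$ and acceptors $\mathbf{A}=\{A_1,\dots,A_m\}$, and utility functions $U_{P_i}:\mathbf{A}\cup\{\emptyset\}\to[0,1)$, $U_{A_j}:\mathbf{P}\cup\{\emptyset\}\to[0,1)$, each injective, with $U_{P_i}(\emptyset)=U_{A_j}(\emptyset)=0$ ($\emptyset$ means "no partner"). A matching $\mu$ is a set of pairs in $(\mathbf{P}\cup\{\emptyset\})\times(\mathbf{A}\cup\{\emptyset\})$ in which each agent appears in exactly one pair; $\mu_{P_i}$, $\mu_{A_j}$ denote partners. A pair $(P_i,A_j)$ is blocking for $\mu$ if $U_{P_i}(A_j)>U_{P_i}(\mu_{P_i})$ and $U_{A_j}(P_i)>U_{A_j}(\mu_{A_j})$; $\mu$ is stable if it has no blocking pair. Repeated game: at each time $t=1,2,\dots$: (Phase 1) each proposer $P_i$ draws an action $a^t_{P_i}\in\mathbf{A}\cup\{\emptyset\}$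 (the acceptor proposed to, or $\emptyset$ for no proposal) from a distribution $\sigma^t_{P_i}$; (Phase 2) each acceptor $A_j$ observes its proposal set $S^t_{A_j}=\{P_i: a^t_{P_i}=A_j\}$ and draws $a^t_{A_j}\in S^t_{A_j}\cup\{\emptyset\}$ from a distribution $\sigma^t_{A_j}$; (Phase 3) the induced matching $\mu(a^t)$ contains $(P_i,A_j)$ iff $a^t_{P_i}=A_j$ and $a^t_{A_j}=P_i$, all other agents are unmatched, and each agent receives utility $u^t_{P_i}=U_{P_i}(\mu_{P_i}(a^t))$, $u^t_{A_j}=U_{A_j}(\mu_{A_j}(a^t))$. Agents know $\mathbf{A}$ (resp. $\mathbf{P}$) but not their own utility functions, and observe no other agent's actions or utilities (except that acceptors observe who proposed to them). A policy is completely uncoupled if each agent's action distribution depends only on its own past observations: $\sigma^t_{P_i}=\pi_{\mathbf{P}}(\{a^\tau_{P_i},u^\tau_{P_i}\}_{\tau<t})$ and $\sigma^t_{A_j}=\pi_{\mathbf{A}}(\{S^\tau_{A_j},a^\tau_{A_j},u^\tau_{A_j}\}_{\tau<t}, S^t_{A_j})$ (the acceptor may also use its current proposal set). *)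

theory Defs
  imports "HOL-Probability.Product_PMF"
begin

text \<open>Proposers are P_0..P_(n-1) (indices i < n), acceptors A_0..A_(m-1) (indices j < m).
  Utilities are given as UP i j = U_{P_i}(A_j) and UA j i = U_{A_j}(P_i);
  the option type encodes the empty partner (None).\<close>

definition uopt :: "(nat \<Rightarrow> nat \<Rightarrow> real) \<Rightarrow> nat \<Rightarrow> nat option \<Rightarrow> real" where
  "uopt U a x = (case x of None \<Rightarrow> 0 | Some b \<Rightarrow> U a b)"

definition market :: "nat \<Rightarrow> nat \<Rightarrow> (nat \<Rightarrow> nat \<Rightarrow> real) \<Rightarrow> (nat \<Rightarrow> nat \<Rightarrow> real) \<Rightarrow> bool" where
  "market n m UP UA \<longleftrightarrow>
     (\<forall>i<n. inj_on (uopt UP i) (insert None (Some ` {..<m}))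
            \<and> (\<forall>j<m. 0 \<le> UP i j \<and> UP i j < 1)) \<and>
     (\<forall>j<m. inj_on (uopt UA j) (insert None (Some ` {..<n}))
            \<and> (\<forall>i<n. 0 \<le> UA j i \<and> UA j i < 1))"

definition is_matching :: "nat \<Rightarrow> nat \<Rightarrow> (nat \<times> nat) set \<Rightarrow> bool" where
  "is_matching n m \<mu> \<longleftrightarrow> \<mu> \<subseteq> {..<n} \<times> {..<m} \<and>
     (\<forall>i j j'. (i,j) \<in> \<mu> \<longrightarrow> (i,j') \<in> \<mu> \<longrightarrow> j = j') \<and>
     (\<forall>i i' j. (i,j) \<in> \<mu> \<longrightarrow> (i',j) \<in> \<mu> \<longrightarrow> i = i')"

definition partnerP :: "(nat \<times> nat) set \<Rightarrow> nat \<Rightarrow> nat option" where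
  "partnerP \<mu> i = (if \<exists>j. (i,j) \<in> \<mu> then Some (THE j. (i,j) \<in> \<mu>) else None)"

definition partnerA :: "(nat \<times> nat) set \<Rightarrow> nat \<Rightarrow> nat option" where
  "partnerA \<mu> j = (if \<exists>i. (i,j) \<in> \<mu> then Some (THE i. (i,j) \<in> \<mu>) else None)"

definition blocking :: "(nat \<Rightarrow> nat \<Rightarrow> real) \<Rightarrow> (nat \<Rightarrow> nat \<Rightarrow> real) \<Rightarrow> (nat \<times> nat) set \<Rightarrow> nat \<Rightarrow> nat \<Rightarrow> bool" where
  "blocking UP UA \<mu> i j \<longleftrightarrow>
     uopt UP i (Some j) > uopt UP i (partnerP \<mu> i) \<and> uopt UA j (Some i) > uopt UA j (partnerA \<mu> j)"

definition stable :: "nat \<Rightarrow> nat \<Rightarrow> (nat \<Rightarrow> nat \<Rightarrow> real) \<Rightarrow> (nat \<Rightarrow> nat \<Rightarrow> real) \<Rightarrow> (nat \<times> nat) set \<Rightarrow> bool" where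
  "stable n m UP UA \<mu> \<longleftrightarrow> \<not> (\<exists>i<n. \<exists>j<m. blocking UP UA \<mu> i j)"

definition stable_matchings :: "nat \<Rightarrow> nat \<Rightarrow> (nat \<Rightarrow> nat \<Rightarrow> real) \<Rightarrow> (nat \<Rightarrow> nat \<Rightarrow> real) \<Rightarrow> (nat \<times> nat) set set" where
  "stable_matchings n m UP UA = {\<mu>. is_matching n m \<mu> \<and> stable n m UP UA \<mu>}"

text \<open>A round records the joint action: proposer actions ap i and acceptor actions aa j.\<close>
type_synonym round = "(nat \<Rightarrow> nat option) \<times> (nat \<Rightarrow> nat option)"

definition props :: "nat \<Rightarrow> (nat \<Rightarrow> nat option) \<Rightarrow> nat \<Rightarrow> nat set" where
  "props n ap j = {i. i < n \<and> ap i = Some j}"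

definition induced :: "nat \<Rightarrow> nat \<Rightarrow> round \<Rightarrow> (nat \<times> nat) set" where
  "induced n m r = {(i,j). i < n \<and> j < m \<and> fst r i = Some j \<and> snd r j = Some i}"

definition obsP :: "nat \<Rightarrow> nat \<Rightarrow> (nat \<Rightarrow> nat \<Rightarrow> real) \<Rightarrow> round list \<Rightarrow> nat \<Rightarrow> (nat option \<times> real) list" where
  "obsP n m UP h i = map (\<lambda>r. (fst r i, uopt UP i (partnerP (induced n m r) i))) h"

definition obsA :: "nat \<Rightarrow> nat \<Rightarrow> (nat \<Rightarrow> nat \<Rightarrow> real) \<Rightarrow> round list \<Rightarrow> nat \<Rightarrow> (nat set \<times> nat option \<times> real) list" where
  "obsA n m UA h j = map (\<lambda>r. (props n (fst r) j, snd r j, uopt UA j (partnerA (induced n m r) j))) h"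

type_synonym policyP = "(nat option \<times> real) list \<Rightarrow> nat option pmf"
type_synonym policyA = "(nat set \<times> nat option \<times> real) list \<Rightarrow> nat set \<Rightarrow> nat option pmf"

definition valid_policyP :: "nat \<Rightarrow> policyP \<Rightarrow> bool" where
  "valid_policyP m \<pi> \<longleftrightarrow> (\<forall>h. set_pmf (\<pi> h) \<subseteq> insert None (Some ` {..<m}))"

definition valid_policyA :: "policyA \<Rightarrow> bool" where
  "valid_policyA \<pi> \<longleftrightarrow> (\<forall>h S. set_pmf (\<pi> h S) \<subseteq> insert None (Some ` S))"

definition round_pmf :: "nat \<Rightarrow> nat \<Rightarrow> (nat \<Rightarrow> nat \<Rightarrow> real) \<Rightarrow> (nat \<Rightarrow> nat \<Rightarrow> real)
    \<Rightarrow> policyP \<Rightarrow> policyA \<Rightarrow> round list \<Rightarrow> round pmf" where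
  "round_pmf n m UP UA \<pi>P \<pi>A h =
     bind_pmf (Pi_pmf {..<n} None (\<lambda>i. \<pi>P (obsP n m UP h i))) (\<lambda>ap.
     bind_pmf (Pi_pmf {..<m} None (\<lambda>j. \<pi>A (obsA n m UA h j) (props n ap j))) (\<lambda>aa.
     return_pmf (ap, aa)))"

primrec hist_pmf :: "nat \<Rightarrow> nat \<Rightarrow> (nat \<Rightarrow> nat \<Rightarrow> real) \<Rightarrow> (nat \<Rightarrow> nat \<Rightarrow> real)
    \<Rightarrow> policyP \<Rightarrow> policyA \<Rightarrow> nat \<Rightarrow> round list pmf" where
  "hist_pmf n m UP UA \<pi>P \<pi>A 0 = return_pmf []"
| "hist_pmf n m UP UA \<pi>P \<pi>A (Suc t) =
     bind_pmf (hist_pmf n m UP UA \<pi>P \<pi>A t) (\<lambda>h. map_pmf (\<lambda>r. h @ [r]) (round_pmf n m UP UA \<pi>P \<pi>A h))"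

end

theory Submission
  imports Defs
begin

definition lup :: "(nat option \<times> real) list \<Rightarrow> nat \<Rightarrow> real" where
  "lup o' j = Max (insert 0 {u. (Some j, u) \<in> set o'})"

definition lua :: "(nat set \<times> nat option \<times> real) list \<Rightarrow> nat \<Rightarrow> real" where
  "lua o' i = Max (insert 0 {u. \<exists>S. (S, Some i, u) \<in> set o'})"

definition rejset :: "nat \<Rightarrow> nat \<Rightarrow> (nat option \<times> real) list \<Rightarrow> nat set" where
  "rejset n m o' = {j. \<exists>k. m*n \<le> k \<and> k < length o' \<and> o' ! k = (Some j, 0)}"

definition tgt :: "nat \<Rightarrow> nat set \<Rightarrow> (nat \<Rightarrow> real) \<Rightarrow> nat option" where
  "tgt m R f = (if \<exists>j. j<m \<and> j\<notin>R \<and> (\<forall>j'<m. j'\<notin>R \<longrightarrow> f j' \<le> f j)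
     then Some (SOME j. j<m \<and> j\<notin>R \<and> (\<forall>j'<m. j'\<notin>R \<longrightarrow> f j' \<le> f j)) else None)"

definition bestA :: "nat set \<Rightarrow> (nat \<Rightarrow> real) \<Rightarrow> nat option" where
  "bestA S f = (if \<exists>i. i\<in>S \<and> (\<forall>i'\<in>S. f i' \<le> f i)
     then Some (SOME i. i\<in>S \<and> (\<forall>i'\<in>S. f i' \<le> f i)) else None)"

definition dP :: "nat \<Rightarrow> nat \<Rightarrow> (nat option \<times> real) list \<Rightarrow> nat option" where
  "dP n m o' = (if length o' < m*n then
      (if (\<exists>u>0. (Some (length o' div n), u) \<in> set o') then None else Some (length o' div n))
     else tgt m (rejset n m o') (lup o'))"

definition dA :: "nat \<Rightarrow> nat \<Rightarrow> (nat set \<times> nat option \<times> real) list \<Rightarrow> nat set \<Rightarrow> nat option" where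
  "dA n m o' S = (if length o' < m*n then (if S = {} then None else Some (LEAST i. i \<in> S))
     else bestA S (lua o'))"

lemma tgt_valid: "tgt m R f \<in> insert None (Some ` {..<m})"
proof (cases "\<exists>j. j<m \<and> j\<notin>R \<and> (\<forall>j'<m. j'\<notin>R \<longrightarrow> f j' \<le> f j)")
  case True
  have "(SOME j. j<m \<and> j\<notin>R \<and> (\<forall>j'<m. j'\<notin>R \<longrightarrow> f j' \<le> f j)) < m"
    using someI_ex[OF True] by blast
  then show ?thesis using True unfolding tgt_def by simp
next
  case False
  have "tgt m R f = None" unfolding tgt_def using False by (rule if_not_P)
  then show ?thesis by simp
qed

lemma dP_valid: "dP n m o' \<in> insert None (Some ` {..<m})"
proof (cases "length o' < m*n")
  case True
  then have "n > 0" by (cases n) auto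
  then have "length o' div n < m" using True
    by (simp add: div_less_iff_less_mult mult.commute)
  then show ?thesis using True unfolding dP_def by auto
next
  case False
  then show ?thesis unfolding dP_def using tgt_valid[of m] by simp
qed

lemma bestA_valid: "bestA S f \<in> insert None (Some ` S)"
proof (cases "\<exists>i. i\<in>S \<and> (\<forall>i'\<in>S. f i' \<le> f i)")
  case True
  have "(SOME i. i\<in>S \<and> (\<forall>i'\<in>S. f i' \<le> f i)) \<in> S"
    using someI_ex[OF True] by blast
  then show ?thesis using True unfolding bestA_def by simp
next
  case False
  have "bestA S f = None" unfolding bestA_def using False by (rule if_not_P)
  then show ?thesis by simp
qed

lemma dA_valid: "dA n m o' S \<in> insert None (Some ` S)"
proof -
  have "S \<noteq> {} \<Longrightarrow> (LEAST i. i \<in> S) \<in> S" by (metis LeastI ex_in_conv)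
  then show ?thesis unfolding dA_def using bestA_valid[of S "lua o'"] by auto
qed

definition rnd :: "nat \<Rightarrow> nat \<Rightarrow> (nat \<Rightarrow> nat \<Rightarrow> real) \<Rightarrow> (nat \<Rightarrow> nat \<Rightarrow> real) \<Rightarrow> round list \<Rightarrow> round" where
  "rnd n m UP UA h = (let ap = (\<lambda>i. if i < n then dP n m (obsP n m UP h i) else None) in
     (ap, (\<lambda>j. if j < m then dA n m (obsA n m UA h j) (props n ap j) else None)))"

lemma round_det:
  "round_pmf n m UP UA (\<lambda>o'. return_pmf (dP n m o')) (\<lambda>o' S. return_pmf (dA n m o' S)) h
    = return_pmf (rnd n m UP UA h)"
  unfolding round_pmf_def rnd_def Let_def by (simp add: bind_return_pmf)

primrec H :: "nat \<Rightarrow> nat \<Rightarrow> (nat \<Rightarrow> nat \<Rightarrow> real) \<Rightarrow> (nat \<Rightarrow> nat \<Rightarrow> real) \<Rightarrow> nat \<Rightarrow> round list" where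
  "H n m UP UA 0 = []"
| "H n m UP UA (Suc t) = H n m UP UA t @ [rnd n m UP UA (H n m UP UA t)]"

lemma hist_det:
  "hist_pmf n m UP UA (\<lambda>o'. return_pmf (dP n m o')) (\<lambda>o' S. return_pmf (dA n m o' S)) t
    = return_pmf (H n m UP UA t)"
  by (induction t) (simp_all add: round_det bind_return_pmf map_pmf_def)


lemma partnerP_ind: "partnerP (induced n m r) i =
   (if i < n \<and> (\<exists>j. j < m \<and> fst r i = Some j \<and> snd r j = Some i) then fst r i else None)"
proof (cases "\<exists>j. (i,j) \<in> induced n m r")
  case True
  then obtain j where j: "(i,j) \<in> induced n m r" by blast
  then have e: "(THE j. (i,j) \<in> induced n m r) = j" unfolding induced_def by auto
  show ?thesis using j unfolding partnerP_def e by (auto simp: induced_def)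
next
  case False
  then show ?thesis unfolding partnerP_def by (auto simp: induced_def)
qed

lemma partnerA_ind: "partnerA (induced n m r) j =
   (if j < m \<and> (\<exists>i. i < n \<and> fst r i = Some j \<and> snd r j = Some i) then snd r j else None)"
proof (cases "\<exists>i. (i,j) \<in> induced n m r")
  case True
  then obtain i where j: "(i,j) \<in> induced n m r" by blast
  then have e: "(THE i. (i,j) \<in> induced n m r) = i" unfolding induced_def by auto
  show ?thesis using j unfolding partnerA_def e by (auto simp: induced_def)
next
  case False
  then show ?thesis unfolding partnerA_def by (auto simp: induced_def)
qed

lemma is_matching_ind: "is_matching n m (induced n m r)"
  unfolding is_matching_def induced_def by auto


lemma tgt_cong: "(\<And>j. j<m \<Longrightarrow> f j = g j) \<Longrightarrow> tgt m R f = tgt m R g"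
proof -
  assume a: "\<And>j. j<m \<Longrightarrow> f j = g j"
  have "(\<lambda>j. j<m \<and> j\<notin>R \<and> (\<forall>j'<m. j'\<notin>R \<longrightarrow> f j' \<le> f j)) =
        (\<lambda>j. j<m \<and> j\<notin>R \<and> (\<forall>j'<m. j'\<notin>R \<longrightarrow> g j' \<le> g j))"
    using a by (intro ext) auto
  then show ?thesis unfolding tgt_def by (simp only:)
qed

lemma bestA_cong: "(\<And>i. i\<in>S \<Longrightarrow> f i = g i) \<Longrightarrow> bestA S f = bestA S g"
proof -
  assume a: "\<And>i. i\<in>S \<Longrightarrow> f i = g i"
  have "(\<lambda>i. i\<in>S \<and> (\<forall>i'\<in>S. f i' \<le> f i)) = (\<lambda>i. i\<in>S \<and> (\<forall>i'\<in>S. g i' \<le> g i))"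
    using a by (intro ext) auto
  then show ?thesis unfolding bestA_def by (simp only:)
qed

lemma tgt_Some: "tgt m R f = Some j \<Longrightarrow> j<m \<and> j\<notin>R \<and> (\<forall>j'<m. j'\<notin>R \<longrightarrow> f j' \<le> f j)"
proof -
  assume a: "tgt m R f = Some j"
  then have ex: "\<exists>j. j<m \<and> j\<notin>R \<and> (\<forall>j'<m. j'\<notin>R \<longrightarrow> f j' \<le> f j)"
    unfolding tgt_def by (auto split: if_splits)
  then have "j = (SOME j. j<m \<and> j\<notin>R \<and> (\<forall>j'<m. j'\<notin>R \<longrightarrow> f j' \<le> f j))"
    using a unfolding tgt_def by simp
  then show ?thesis using someI_ex[OF ex] by simp
qed

lemma tgt_None: "tgt m R f = None \<Longrightarrow> j < m \<Longrightarrow> j \<in> R"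
proof (rule ccontr)
  assume a: "tgt m R f = None" "j < m" "j \<notin> R"
  define A where "A = {j. j<m \<and> j\<notin>R}"
  have fin: "finite A" "A \<noteq> {}" using a unfolding A_def by auto
  then have "Max (f ` A) \<in> f ` A" by (intro Max_in) auto
  then obtain j0 where j0: "j0 \<in> A" "f j0 = Max (f ` A)" by auto
  have "\<forall>j'<m. j'\<notin>R \<longrightarrow> f j' \<le> f j0" using fin j0 unfolding A_def by auto
  then have "\<exists>j. j<m \<and> j\<notin>R \<and> (\<forall>j'<m. j'\<notin>R \<longrightarrow> f j' \<le> f j)" using j0 unfolding A_def by blast
  then show False using a unfolding tgt_def by simp
qed

lemma bestA_Some: "bestA S f = Some i \<Longrightarrow> i\<in>S \<and> (\<forall>i'\<in>S. f i' \<le> f i)"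
proof -
  assume a: "bestA S f = Some i"
  then have ex: "\<exists>i. i\<in>S \<and> (\<forall>i'\<in>S. f i' \<le> f i)"
    unfolding bestA_def by (auto split: if_splits)
  then have "i = (SOME i. i\<in>S \<and> (\<forall>i'\<in>S. f i' \<le> f i))"
    using a unfolding bestA_def by simp
  then show ?thesis using someI_ex[OF ex] by simp
qed

lemma bestA_None: "bestA S f = None \<Longrightarrow> finite S \<Longrightarrow> i \<in> S \<Longrightarrow> False"
proof -
  assume a: "bestA S f = None" "finite S" "i \<in> S"
  then have "Max (f ` S) \<in> f ` S" by (intro Max_in) auto
  then obtain j0 where j0: "j0 \<in> S" "f j0 = Max (f ` S)" by auto
  have "\<forall>i'\<in>S. f i' \<le> f j0" using a j0 by auto
  then have "\<exists>i. i\<in>S \<and> (\<forall>i'\<in>S. f i' \<le> f i)" using j0 by blast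
  then show False using a unfolding bestA_def by simp
qed

locale gs =
  fixes n m :: nat and UP UA :: "nat \<Rightarrow> nat \<Rightarrow> real"
  assumes mk: "market n m UP UA"
begin

definition R :: "nat \<Rightarrow> round" where "R t = rnd n m UP UA (H n m UP UA t)"

lemma H_eq: "H n m UP UA t = map R [0..<t]"
  by (induction t) (simp_all add: R_def)

abbreviation ap where "ap t \<equiv> fst (R t)"
abbreviation aa where "aa t \<equiv> snd (R t)"

definition uP :: "nat \<Rightarrow> nat \<Rightarrow> real" where
  "uP k i = uopt UP i (partnerP (induced n m (R k)) i)"
definition uA :: "nat \<Rightarrow> nat \<Rightarrow> real" where
  "uA k j = uopt UA j (partnerA (induced n m (R k)) j)"

definition mt where "mt t i j \<longleftrightarrow> i < n \<and> j < m \<and> ap t i = Some j \<and> aa t j = Some i"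

lemma UPpos: "i < n \<Longrightarrow> j < m \<Longrightarrow> UP i j > 0"
proof -
  assume a: "i < n" "j < m"
  have "inj_on (uopt UP i) (insert None (Some ` {..<m}))" "0 \<le> UP i j"
    using mk a unfolding market_def by auto
  moreover have "uopt UP i (Some j) \<noteq> uopt UP i None"
    using calculation(1) a by (metis inj_onD insertCI lessThan_iff image_eqI option.distinct(1))
  ultimately show ?thesis by (simp add: uopt_def)
qed

lemma UApos: "i < n \<Longrightarrow> j < m \<Longrightarrow> UA j i > 0"
proof -
  assume a: "i < n" "j < m"
  have "inj_on (uopt UA j) (insert None (Some ` {..<n}))" "0 \<le> UA j i"
    using mk a unfolding market_def by auto
  moreover have "uopt UA j (Some i) \<noteq> uopt UA j None"
    using calculation(1) a by (metis inj_onD insertCI lessThan_iff image_eqI option.distinct(1))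
  ultimately show ?thesis by (simp add: uopt_def)
qed

lemma UPinj: "i < n \<Longrightarrow> j < m \<Longrightarrow> j' < m \<Longrightarrow> UP i j = UP i j' \<Longrightarrow> j = j'"
proof -
  assume a: "i < n" "j < m" "j' < m" "UP i j = UP i j'"
  have "inj_on (uopt UP i) (insert None (Some ` {..<m}))" using mk a unfolding market_def by auto
  moreover have "uopt UP i (Some j) = uopt UP i (Some j')" using a by (simp add: uopt_def)
  ultimately have "Some j = Some j'" using a by (meson inj_onD insertCI lessThan_iff rev_image_eqI)
  then show ?thesis by simp
qed

lemma UAinj: "j < m \<Longrightarrow> i < n \<Longrightarrow> i' < n \<Longrightarrow> UA j i = UA j i' \<Longrightarrow> i = i'"
proof -
  assume a: "j < m" "i < n" "i' < n" "UA j i = UA j i'"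
  have "inj_on (uopt UA j) (insert None (Some ` {..<n}))" using mk a unfolding market_def by auto
  moreover have "uopt UA j (Some i) = uopt UA j (Some i')" using a by (simp add: uopt_def)
  ultimately have "Some i = Some i'" using a by (meson inj_onD insertCI lessThan_iff rev_image_eqI)
  then show ?thesis by simp
qed

lemma ap_eq: "ap t i = (if i < n then dP n m (obsP n m UP (H n m UP UA t) i) else None)"
  unfolding R_def rnd_def Let_def by simp

lemma aa_eq: "aa t j = (if j < m then dA n m (obsA n m UA (H n m UP UA t) j) (props n (ap t) j) else None)"
  unfolding R_def rnd_def Let_def by simp

lemma obsP_H: "obsP n m UP (H n m UP UA t) i = map (\<lambda>k. (ap k i, uP k i)) [0..<t]"
  unfolding obsP_def H_eq uP_def by simp

lemma obsA_H: "obsA n m UA (H n m UP UA t) j = map (\<lambda>k. (props n (ap k) j, aa k j, uA k j)) [0..<t]"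
  unfolding obsA_def H_eq uA_def by simp

lemma ap_range: "ap t i = Some j \<Longrightarrow> i < n \<and> j < m"
proof -
  assume a: "ap t i = Some j"
  then have i: "i < n" by (cases "i < n") (auto simp: ap_eq)
  have "ap t i \<in> insert None (Some ` {..<m})" using i dP_valid[of n m] by (simp add: ap_eq)
  then show ?thesis using a i by auto
qed

lemma aa_range: "aa t j = Some i \<Longrightarrow> j < m \<and> i < n \<and> ap t i = Some j"
proof -
  assume a: "aa t j = Some i"
  then have j: "j < m" by (cases "j < m") (auto simp: aa_eq)
  have "aa t j \<in> insert None (Some ` props n (ap t) j)"
    using j dA_valid[of n m _ "props n (ap t) j"] by (simp add: aa_eq)
  then have "Some i \<in> insert None (Some ` props n (ap t) j)" using a by simp
  then show ?thesis using j by (auto simp: props_def)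
qed

lemma mt_iff: "mt t i j \<longleftrightarrow> (i,j) \<in> induced n m (R t)"
  unfolding mt_def induced_def by auto

lemma uP_Some: "ap k i = Some j \<Longrightarrow> uP k i = (if mt k i j then UP i j else 0)"
proof -
  assume a: "ap k i = Some j"
  then have r: "i < n" "j < m" using ap_range by auto
  show ?thesis unfolding uP_def partnerP_ind using a r by (auto simp: mt_def uopt_def)
qed

lemma uA_Some: "aa k j = Some i \<Longrightarrow> uA k j = (if mt k i j then UA j i else 0)"
proof -
  assume a: "aa k j = Some i"
  then have r: "i < n" "j < m" "ap k i = Some j" using aa_range by auto
  show ?thesis unfolding uA_def partnerA_ind using a r by (auto simp: mt_def uopt_def)
qed


lemma set_obsP: "(a, u) \<in> set (obsP n m UP (H n m UP UA t) i) \<longleftrightarrow> (\<exists>k<t. a = ap k i \<and> u = uP k i)"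
  unfolding obsP_H by auto

lemma len_obsP: "length (obsP n m UP (H n m UP UA t) i) = t"
  unfolding obsP_H by simp

lemma len_obsA: "length (obsA n m UA (H n m UP UA t) j) = t"
  unfolding obsA_H by simp

lemma explore_P:
  assumes t: "t < m*n"
    and IH: "\<And>k i j. k < t \<Longrightarrow> mt k i j \<longleftrightarrow> i = k mod n \<and> j = k div n"
  shows "ap t i = (if i<n \<and> t mod n \<le> i then Some (t div n) else None)"
proof (cases "i < n")
  case False
  then show ?thesis by (simp add: ap_eq)
next
  case i: True
  define J where "J = t div n"
  have n: "n > 0" using t by (cases n) auto
  have "(\<exists>u>0. (Some J, u) \<in> set (obsP n m UP (H n m UP UA t) i)) \<longleftrightarrow> (\<exists>k<t. mt k i J)"
  proof
    assume "\<exists>u>0. (Some J, u) \<in> set (obsP n m UP (H n m UP UA t) i)"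
    then obtain k u where k: "k < t" "Some J = ap k i" "u = uP k i" "u > 0"
      unfolding set_obsP by blast
    then have "mt k i J" using uP_Some[of k i J] by (auto split: if_splits)
    then show "\<exists>k<t. mt k i J" using k by blast
  next
    assume "\<exists>k<t. mt k i J"
    then obtain k where k: "k < t" "mt k i J" by blast
    then have "ap k i = Some J" "uP k i = UP i J" "UP i J > 0"
      using uP_Some[of k i J] UPpos[of i J] by (auto simp: mt_def)
    then show "\<exists>u>0. (Some J, u) \<in> set (obsP n m UP (H n m UP UA t) i)"
      unfolding set_obsP using k by metis
  qed
  also have "\<dots> \<longleftrightarrow> i < t mod n"
  proof
    assume "\<exists>k<t. mt k i J"
    then obtain k where k: "k < t" "i = k mod n" "J = k div n" using IH by blast
    have "k = J * n + i" using k by simp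
    moreover have "t = J * n + t mod n" unfolding J_def by simp
    ultimately show "i < t mod n" using k(1) by linarith
  next
    assume a: "i < t mod n"
    define k where "k = J * n + i"
    have tt: "t = J * n + t mod n" unfolding J_def by simp
    have "k < t" using a tt unfolding k_def by linarith
    moreover have "k mod n = i" "k div n = J" using i n unfolding k_def by auto
    ultimately show "\<exists>k<t. mt k i J" using IH by metis
  qed
  finally have e: "(\<exists>u>0. (Some J, u) \<in> set (obsP n m UP (H n m UP UA t) i)) \<longleftrightarrow> i < t mod n" .
  show ?thesis using i t e unfolding ap_eq dP_def len_obsP J_def by auto
qed

lemma explore:
  "t < m*n \<Longrightarrow> (\<forall>i. ap t i = (if i<n \<and> t mod n \<le> i then Some (t div n) else None)) \<and>
       (\<forall>j. aa t j = (if j = t div n then Some (t mod n) else None))"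
proof (induction t rule: less_induct)
  case (less t)
  have n: "n > 0" using less.prems by (cases n) auto
  have IH: "mt k i j \<longleftrightarrow> i = k mod n \<and> j = k div n" if k: "k < t" for k i j
  proof -
    have km: "k < m*n" using k less.prems by simp
    then have "k div n < m" using n by (simp add: div_less_iff_less_mult mult.commute)
    moreover have "k mod n < n" using n by simp
    ultimately show ?thesis using less.IH[OF k km] unfolding mt_def by auto
  qed
  have P: "\<forall>i. ap t i = (if i<n \<and> t mod n \<le> i then Some (t div n) else None)"
    using explore_P[OF less.prems IH] by blast
  have jm: "t div n < m" using less.prems n by (simp add: div_less_iff_less_mult mult.commute)
  have tm: "t mod n < n" using n by simp
  have A: "aa t j = (if j = t div n then Some (t mod n) else None)" for j
  proof (cases "j < m")
    case False
    then show ?thesis using jm by (auto simp: aa_eq)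
  next
    case True
    have S: "props n (ap t) j = (if j = t div n then {t mod n..<n} else {})"
      unfolding props_def using P by auto
    have L: "(LEAST i. i \<in> {t mod n..<n}) = t mod n"
      using tm by (intro Least_equality) auto
    show ?thesis using True less.prems tm L unfolding aa_eq dA_def len_obsA S by auto
  qed
  show ?case using P A by blast
qed

lemma mt_explore: "k < m*n \<Longrightarrow> mt k i j \<longleftrightarrow> i = k mod n \<and> j = k div n"
proof -
  assume km: "k < m*n"
  have n: "n > 0" using km by (cases n) auto
  have "k div n < m" using km n by (simp add: div_less_iff_less_mult mult.commute)
  moreover have "k mod n < n" using n by simp
  ultimately show ?thesis using explore[OF km] unfolding mt_def by auto
qed

lemma mt_explore2: "i < n \<Longrightarrow> j < m \<Longrightarrow> mt (j*n+i) i j \<and> j*n+i < m*n"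
proof -
  assume a: "i < n" "j < m"
  have "j*n+i < (j+1)*n" using a by simp
  also have "\<dots> \<le> m*n" using a by (intro mult_right_mono) auto
  finally have k: "j*n+i < m*n" .
  show ?thesis using mt_explore[OF k] a k by simp
qed


lemma lup_eq:
  assumes t: "m*n \<le> t" and i: "i < n" and j: "j < m"
  shows "lup (obsP n m UP (H n m UP UA t) i) j = UP i j"
proof -
  have sub: "u = 0 \<or> u = UP i j" if "(Some j, u) \<in> set (obsP n m UP (H n m UP UA t) i)" for u
    using that uP_Some unfolding set_obsP by (metis)
  obtain k where k: "mt k i j" "k < m*n" using mt_explore2[OF i j] by blast
  then have "ap k i = Some j" "uP k i = UP i j" using uP_Some[of k i j] by (auto simp: mt_def)
  then have mem: "(Some j, UP i j) \<in> set (obsP n m UP (H n m UP UA t) i)"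
    unfolding set_obsP using k t by (metis less_le_trans)
  have "insert 0 {u. (Some j, u) \<in> set (obsP n m UP (H n m UP UA t) i)} = {0, UP i j}"
    using sub mem by auto
  then show ?thesis unfolding lup_def using UPpos[OF i j] by simp
qed

lemma set_obsA: "(S, a, u) \<in> set (obsA n m UA (H n m UP UA t) j) \<longleftrightarrow>
   (\<exists>k<t. S = props n (ap k) j \<and> a = aa k j \<and> u = uA k j)"
  unfolding obsA_H by auto

lemma lua_eq:
  assumes t: "m*n \<le> t" and i: "i < n" and j: "j < m"
  shows "lua (obsA n m UA (H n m UP UA t) j) i = UA j i"
proof -
  have sub: "u = 0 \<or> u = UA j i" if "\<exists>S. (S, Some i, u) \<in> set (obsA n m UA (H n m UP UA t) j)" for u
    using that uA_Some unfolding set_obsA by (metis)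
  obtain k where k: "mt k i j" "k < m*n" using mt_explore2[OF i j] by blast
  then have "aa k j = Some i" "uA k j = UA j i" using uA_Some[of k j i] by (auto simp: mt_def)
  then have mem: "\<exists>S. (S, Some i, UA j i) \<in> set (obsA n m UA (H n m UP UA t) j)"
    unfolding set_obsA using k t by (metis less_le_trans)
  have "insert 0 {u. \<exists>S. (S, Some i, u) \<in> set (obsA n m UA (H n m UP UA t) j)} = {0, UA j i}"
    using sub mem by auto
  then show ?thesis unfolding lua_def using UApos[OF i j] by simp
qed

definition Rej :: "nat \<Rightarrow> nat \<Rightarrow> nat set" where
  "Rej t i = {j. \<exists>k. m*n \<le> k \<and> k < t \<and> ap k i = Some j \<and> uP k i = 0}"

lemma rejset_eq: "rejset n m (obsP n m UP (H n m UP UA t) i) = Rej t i"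
  unfolding rejset_def Rej_def len_obsP by (auto simp: obsP_H)

lemma ap_gs: "m*n \<le> t \<Longrightarrow> ap t i = (if i<n then tgt m (Rej t i) (UP i) else None)"
proof -
  assume t: "m*n \<le> t"
  show ?thesis
  proof (cases "i < n")
    case True
    have "tgt m (Rej t i) (lup (obsP n m UP (H n m UP UA t) i)) = tgt m (Rej t i) (UP i)"
      using lup_eq[OF t True] by (intro tgt_cong) auto
    then show ?thesis using True t unfolding ap_eq dP_def len_obsP rejset_eq by simp
  qed (simp add: ap_eq)
qed

lemma aa_gs: "m*n \<le> t \<Longrightarrow> aa t j = (if j<m then bestA (props n (ap t) j) (UA j) else None)"
proof -
  assume t: "m*n \<le> t"
  show ?thesis
  proof (cases "j < m")
    case True
    have "bestA (props n (ap t) j) (lua (obsA n m UA (H n m UP UA t) j)) = bestA (props n (ap t) j) (UA j)"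
      using lua_eq[OF t _ True] by (intro bestA_cong) (auto simp: props_def)
    then show ?thesis using True t unfolding aa_eq dA_def len_obsA by simp
  qed (simp add: aa_eq)
qed

lemma Rej_Suc: "Rej (Suc t) i = Rej t i \<union> {j. m*n \<le> t \<and> ap t i = Some j \<and> uP t i = 0}"
  unfolding Rej_def by (auto simp: less_Suc_eq)


lemma stay: "m*n \<le> t \<Longrightarrow> mt t i j \<Longrightarrow> ap (Suc t) i = Some j"
proof -
  assume t: "m*n \<le> t" and a: "mt t i j"
  then have r: "i < n" "j < m" "ap t i = Some j" unfolding mt_def by auto
  have "uP t i = UP i j" using uP_Some[OF r(3)] a by simp
  then have "uP t i \<noteq> 0" using UPpos[OF r(1,2)] by simp
  then have "Rej (Suc t) i = Rej t i" unfolding Rej_Suc by auto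
  then show ?thesis using ap_gs[OF t, of i] ap_gs[of "Suc t" i] t r by simp
qed

lemma finite_props: "finite (props n ap' j)"
  unfolding props_def by simp

lemma hold:
  assumes tt': "t \<le> t'" and tmn: "m*n \<le> t" and at: "aa t j = Some i"
  shows "\<exists>i'. aa t' j = Some i' \<and> UA j i \<le> UA j i'"
  using tt'
proof (induction t' rule: dec_induct)
  case base
  then show ?case using at by auto
next
  case (step t')
  then obtain i' where i': "aa t' j = Some i'" "UA j i \<le> UA j i'" by blast
  have r: "j < m" "i' < n" "ap t' i' = Some j" using aa_range[OF i'(1)] by auto
  then have "mt t' i' j" using i' unfolding mt_def by simp
  then have "ap (Suc t') i' = Some j" using stay step tmn by simp
  then have mem: "i' \<in> props n (ap (Suc t')) j" using r unfolding props_def by simp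
  have tt: "m*n \<le> Suc t'" using step tmn by simp
  show ?case
  proof (cases "bestA (props n (ap (Suc t')) j) (UA j)")
    case None
    then show ?thesis using bestA_None[OF None finite_props mem] by simp
  next
    case (Some i'')
    then have "UA j i' \<le> UA j i''" using bestA_Some[OF Some] mem by blast
    then show ?thesis using aa_gs[OF tt, of j] r Some i' by auto
  qed
qed

lemma rejected: "m*n \<le> t \<Longrightarrow> ap t i = Some j \<Longrightarrow> uP t i = 0 \<Longrightarrow> \<exists>i'. aa t j = Some i' \<and> UA j i < UA j i'"
proof -
  assume t: "m*n \<le> t" and a: "ap t i = Some j" and u: "uP t i = 0"
  have r: "i < n" "j < m" using ap_range[OF a] by auto
  have mem: "i \<in> props n (ap t) j" using a r unfolding props_def by simp
  show ?thesis
  proof (cases "bestA (props n (ap t) j) (UA j)")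
    case None
    then show ?thesis using bestA_None[OF None finite_props mem] by simp
  next
    case (Some i')
    have b: "i' \<in> props n (ap t) j" "UA j i \<le> UA j i'" using bestA_Some[OF Some] mem by auto
    have aa': "aa t j = Some i'" using aa_gs[OF t, of j] r Some by simp
    have "i' \<noteq> i"
    proof
      assume "i' = i"
      then have "mt t i j" using aa' a r unfolding mt_def by simp
      then have "uP t i = UP i j" using uP_Some[OF a] by simp
      then show False using u UPpos[OF r] by simp
    qed
    moreover have "i' < n" using b unfolding props_def by simp
    ultimately have "UA j i \<noteq> UA j i'" using UAinj[OF r(2) r(1)] by metis
    then show ?thesis using b aa' by auto
  qed
qed

definition norej :: "nat \<Rightarrow> bool" where
  "norej t \<longleftrightarrow> (\<forall>i j. ap t i = Some j \<longrightarrow> mt t i j)"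

lemma fixpt: "m*n \<le> t \<Longrightarrow> norej t \<Longrightarrow> R (Suc t) = R t"
proof -
  assume t: "m*n \<le> t" and nr: "norej t"
  have rej: "Rej (Suc t) i = Rej t i" for i
  proof -
    have "\<not> (ap t i = Some j \<and> uP t i = 0)" for j
    proof
      assume a: "ap t i = Some j \<and> uP t i = 0"
      then have "mt t i j" using nr unfolding norej_def by blast
      then have "uP t i = UP i j" "i < n" "j < m" using uP_Some[of t i j] a unfolding mt_def by auto
      then show False using a UPpos by fastforce
    qed
    then show ?thesis unfolding Rej_Suc by auto
  qed
  have tt: "m*n \<le> Suc t" using t by simp
  have A: "ap (Suc t) = ap t"
    by (rule ext) (simp add: ap_gs[OF t] ap_gs[OF tt] rej)
  have B: "aa (Suc t) = aa t"
    by (rule ext) (simp add: aa_gs[OF t] aa_gs[OF tt] A)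
  show ?thesis using A B by (simp add: prod_eq_iff)
qed

lemma fixpt_all:
  assumes tt': "t \<le> t'" and tmn: "m*n \<le> t" and nr: "norej t"
  shows "R t' = R t"
  using tt'
proof (induction t' rule: dec_induct)
  case base
  then show ?case by simp
next
  case (step t')
  have "norej t'" using nr step.IH unfolding norej_def mt_def by simp
  then have "R (Suc t') = R t'" using fixpt step tmn by simp
  then show ?case using step by simp
qed

definition N :: "nat \<Rightarrow> nat" where "N t = (\<Sum>i<n. card (Rej t i))"

lemma Rej_sub: "Rej t i \<subseteq> {..<m}"
  unfolding Rej_def using ap_range by auto

lemma N_bound: "N t \<le> n*m"
proof -
  have "N t \<le> (\<Sum>i<n. m)" unfolding N_def
    using Rej_sub by (intro sum_mono) (metis card_lessThan card_mono finite_lessThan)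
  then show ?thesis by simp
qed

lemma N_inc: "m*n \<le> t \<Longrightarrow> \<not> norej t \<Longrightarrow> N t < N (Suc t)"
proof -
  assume t: "m*n \<le> t" and nr: "\<not> norej t"
  then obtain i j where a: "ap t i = Some j" "\<not> mt t i j" unfolding norej_def by blast
  have r: "i < n" "j < m" using ap_range[OF a(1)] by auto
  have u: "uP t i = 0" using uP_Some[OF a(1)] a(2) by simp
  have "tgt m (Rej t i) (UP i) = Some j" using ap_gs[OF t, of i] a r by simp
  then have jn: "j \<notin> Rej t i" using tgt_Some by blast
  have mono: "card (Rej t i') \<le> card (Rej (Suc t) i')" for i'
    using Rej_sub by (intro card_mono) (auto simp: Rej_Suc intro: finite_subset)
  have "Rej (Suc t) i = insert j (Rej t i)" using t a u unfolding Rej_Suc by auto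
  then have "card (Rej t i) < card (Rej (Suc t) i)"
    using jn Rej_sub[of t i] by (simp add: finite_subset)
  then show ?thesis unfolding N_def using mono r
    by (intro sum_strict_mono_ex1) auto
qed

lemma ex_norej: "\<exists>t0\<ge>m*n. norej t0"
proof (rule ccontr)
  assume "\<not> ?thesis"
  then have h: "\<And>t. m*n \<le> t \<Longrightarrow> \<not> norej t" by blast
  have "k \<le> N (m*n + k)" for k
  proof (induction k)
    case 0
    then show ?case by simp
  next
    case (Suc k)
    have "N (m*n + k) < N (Suc (m*n + k))" using N_inc h by simp
    then show ?case using Suc by simp
  qed
  then have "n*m+1 \<le> N (m*n + (n*m+1))" by blast
  then show False using N_bound[of "m*n + (n*m+1)"] by simp
qed

lemma stable_fix:
  assumes t0: "m*n \<le> t0" and nr: "norej t0"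
  shows "stable n m UP UA (induced n m (R t0))"
  unfolding stable_def
proof (intro notI, elim exE conjE)
  fix i j assume i: "i < n" and j: "j < m" and bl: "blocking UP UA (induced n m (R t0)) i j"
  have pP: "partnerP (induced n m (R t0)) i = ap t0 i"
  proof (cases "ap t0 i")
    case None
    then show ?thesis unfolding partnerP_ind by auto
  next
    case (Some j')
    then have "mt t0 i j'" using nr unfolding norej_def by blast
    then show ?thesis unfolding partnerP_ind mt_def by auto
  qed
  have "j \<in> Rej t0 i"
  proof (cases "ap t0 i")
    case None
    then have "tgt m (Rej t0 i) (UP i) = None" using ap_gs[OF t0, of i] i by simp
    then show ?thesis using tgt_None j by blast
  next
    case (Some j')
    then have tg: "tgt m (Rej t0 i) (UP i) = Some j'" using ap_gs[OF t0, of i] i by simp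
    have "UP i j > UP i j'" using bl Some pP unfolding blocking_def uopt_def by simp
    then show ?thesis using tgt_Some[OF tg] j by force
  qed
  then obtain k where k: "m*n \<le> k" "k < t0" "ap k i = Some j" "uP k i = 0" unfolding Rej_def by blast
  obtain i' where i': "aa k j = Some i'" "UA j i < UA j i'" using rejected[OF k(1,3,4)] by blast
  obtain i'' where i'': "aa t0 j = Some i''" "UA j i' \<le> UA j i''"
    using hold[OF _ k(1) i'(1), of t0] k(2) by fastforce
  have r: "i'' < n" "ap t0 i'' = Some j" using aa_range[OF i''(1)] by auto
  have "partnerA (induced n m (R t0)) j = Some i''"
    unfolding partnerA_ind using r j i'' by auto
  then show False using bl i' i'' unfolding blocking_def uopt_def by simp
qed

lemma final:
  assumes "0 < \<delta>"
  shows "\<exists>T. \<forall>t\<ge>T. measure_pmf.prob (hist_pmf n m UP UA (\<lambda>o'. return_pmf (dP n m o')) (\<lambda>o' S. return_pmf (dA n m o' S)) t)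
              {h. h \<noteq> [] \<and> induced n m (last h) \<in> stable_matchings n m UP UA} > 1 - \<delta>"
proof -
  obtain t0 where t0: "m*n \<le> t0" "norej t0" using ex_norej by blast
  define X where "X = {h. h \<noteq> [] \<and> induced n m (last h) \<in> stable_matchings n m UP UA}"
  have "measure_pmf.prob (hist_pmf n m UP UA (\<lambda>o'. return_pmf (dP n m o')) (\<lambda>o' S. return_pmf (dA n m o' S)) t) X > 1 - \<delta>"
    if t: "t \<ge> Suc t0" for t
  proof -
    have ne: "H n m UP UA t \<noteq> []" using t by (simp add: H_eq)
    have "last (H n m UP UA t) = R (t - 1)" using t unfolding H_eq
      by (cases t) (auto simp: last_map)
    also have "\<dots> = R t0" using fixpt_all[OF _ t0, of "t - 1"] t by simp
    finally have "H n m UP UA t \<in> X"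
      using ne stable_fix[OF t0] is_matching_ind unfolding stable_matchings_def X_def by simp
    then have "indicator X (H n m UP UA t) = (1::real)" by (rule indicator_simps(1))
    then have "measure_pmf.prob (hist_pmf n m UP UA (\<lambda>o'. return_pmf (dP n m o')) (\<lambda>o' S. return_pmf (dA n m o' S)) t) X = 1"
      by (simp only: hist_det measure_return_pmf)
    then show ?thesis using assms by linarith
  qed
  then show ?thesis unfolding X_def by blast
qed

end


theorem theorem1:
  fixes n m :: nat and \<delta> :: real
  assumes "0 < \<delta>" and "\<delta> \<le> 1"
  shows "\<exists>\<pi>P \<pi>A. valid_policyP m \<pi>P \<and> valid_policyA \<pi>A \<and>
     (\<forall>UP UA. market n m UP UA \<longrightarrow>
        (\<exists>T. \<forall>t\<ge>T. measure_pmf.prob (hist_pmf n m UP UA \<pi>P \<pi>A t)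
              {h. h \<noteq> [] \<and> induced n m (last h) \<in> stable_matchings n m UP UA} > 1 - \<delta>))"
proof -
  have vP: "valid_policyP m (\<lambda>o'. return_pmf (dP n m o'))"
    unfolding valid_policyP_def using dP_valid by simp
  have vA: "valid_policyA (\<lambda>o' S. return_pmf (dA n m o' S))"
    unfolding valid_policyA_def using dA_valid by simp
  have fin: "\<forall>UP UA. market n m UP UA \<longrightarrow>
        (\<exists>T. \<forall>t\<ge>T. measure_pmf.prob (hist_pmf n m UP UA (\<lambda>o'. return_pmf (dP n m o')) (\<lambda>o' S. return_pmf (dA n m o' S)) t)
              {h. h \<noteq> [] \<and> induced n m (last h) \<in> stable_matchings n m UP UA} > 1 - \<delta>)"
    using gs.final[OF gs.intro assms(1)] by blast
  show ?thesis using vP vA fin by blast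
qed

end
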